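(* Let $\alpha,\beta$ be real (or complex) parameters and let $k,m,s$ be non-negative integers with $s\le k$. Then $$\genfrac{\lfloor}{\rfloor}{0pt}{}{k+m}{k}^{\alpha,\beta}=\sum_{j=0}^{s}\left(\sum_{k-j\le i_1\le i_2\le\cdots\le i_{s-j}\le k}\ \prod_{l=0}^{s-j-1}\Big((\alpha+\beta)i_{l+1}+\alpha\big(m-(s-j-l)\big)\Big)\right)\genfrac{\lfloor}{\rfloor}{0pt}{}{k+m-s}{k-j}^{\alpha,\beta},$$ where, for $j=s$, the inner sum is over the empty tuple and equals $1$ (empty product).
   Context: For parameters $\alpha,\beta$, the generalized Stirling numbers $\genfrac{\lfloor}{\rfloor}{0pt}{}{n}{k}^{\alpha,\beta}$, $0\le k\le n$, are defined by the polynomial identity in $x$ $$x(x+\alpha)\cdots(x+(n-1)\alpha)=\sum_{k=0}^{n}\genfrac{\lfloor}{\rfloor}{0pt}{}{n}{k}^{\alpha,\beta}\,x(x-\beta)\cdots(x-(k-1)\beta),$$ (empty products equal $1$), and $\genfrac{\lfloor}{\rfloor}{0pt}{}{n}{k}^{\alpha,\beta}=0$ for $n<0$, $k<0$ or $k>n$. *)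

theory Defs
  imports Main
begin

definition gstirling :: "'a::field_char_0 \<Rightarrow> 'a \<Rightarrow> nat \<Rightarrow> nat \<Rightarrow> 'a" where
  "gstirling a b n k =
     (THE c::nat \<Rightarrow> 'a. (\<forall>i>n. c i = 0) \<and>
        (\<forall>x. (\<Prod>i<n. x + of_nat i * a) = (\<Sum>i\<le>n. c i * (\<Prod>l<i. x - of_nat l * b)))) k"

text \<open>Weakly increasing tuples (i_1,...,i_r) with lo \<le> i_1 \<le> ... \<le> i_r \<le> hi,
  encoded as functions f with f t = i_(t+1) for t < r and f t = 0 for t \<ge> r.\<close>

definition mono_tuples :: "nat \<Rightarrow> nat \<Rightarrow> nat \<Rightarrow> (nat \<Rightarrow> nat) set" where
  "mono_tuples r lo hi =
     {f. (\<forall>t<r. lo \<le> f t \<and> f t \<le> hi) \<and> (\<forall>t u. t \<le> u \<longrightarrow> u < r \<longrightarrow> f t \<le> f u)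
         \<and> (\<forall>t\<ge>r. f t = 0)}"

end

theory Submission imports Defs "HOL-Computational_Algebra.Polynomial" begin

definition Fp :: "'a::field_char_0 \<Rightarrow> nat \<Rightarrow> 'a poly" where
  "Fp b i = (\<Prod>l<i. [:- (of_nat l * b), 1:])"

lemma Fp_poly: "poly (Fp b i) x = (\<Prod>l<i. x - of_nat l * b)"
  unfolding Fp_def by (simp add: poly_prod)

lemma Fp_deg: "degree (Fp b i) = i \<and> coeff (Fp b i) i = 1"
proof (induction i)
  case 0 then show ?case by (simp add: Fp_def)
next
  case (Suc i)
  have e: "Fp b (Suc i) = Fp b i * [:- (of_nat i * b), 1:]" by (simp add: Fp_def)
  have nz: "Fp b i \<noteq> 0" using Suc by auto
  have d: "degree (Fp b (Suc i)) = Suc i" using Suc nz unfolding e by (subst degree_mult_eq) auto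
  have "lead_coeff (Fp b (Suc i)) = 1" unfolding e lead_coeff_mult using Suc by simp
  with d show ?case by simp
qed

lemma uniq:
  fixes c :: "nat \<Rightarrow> 'a::field_char_0"
  assumes "\<forall>x. (\<Sum>i\<le>n. c i * (\<Prod>l<i. x - of_nat l * b)) = 0"
  shows "\<forall>i\<le>n. c i = 0"
  using assms
proof (induction n)
  case 0 then show ?case by simp
next
  case (Suc n)
  define Q where "Q = (\<Sum>i\<le>Suc n. smult (c i) (Fp b i))"
  have "\<forall>x. poly Q x = 0" using Suc.prems by (simp add: Q_def poly_sum Fp_poly)
  hence Q0: "Q = 0" using poly_all_0_iff_0 by blast
  have "coeff Q (Suc n) = (\<Sum>i\<le>Suc n. c i * coeff (Fp b i) (Suc n))"
    by (simp add: Q_def coeff_sum)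
  also have "\<dots> = c (Suc n)"
  proof -
    have "\<forall>i\<le>n. coeff (Fp b i) (Suc n) = 0"
      using Fp_deg by (metis coeff_eq_0 le_imp_less_Suc)
    thus ?thesis using Fp_deg[of b "Suc n"] by (simp add: sum.atMost_Suc)
  qed
  finally have cS: "c (Suc n) = 0" using Q0 by simp
  have "\<forall>x. (\<Sum>i\<le>n. c i * (\<Prod>l<i. x - of_nat l * b)) = 0"
    using Suc.prems cS by (simp add: sum.atMost_Suc)
  then have "\<forall>i\<le>n. c i = 0" by (rule Suc.IH)
  with cS show ?case using le_Suc_eq by auto
qed


fun G :: "'a::field_char_0 \<Rightarrow> 'a \<Rightarrow> nat \<Rightarrow> nat \<Rightarrow> 'a" where
  "G a b 0 k = (if k = 0 then 1 else 0)"
| "G a b (Suc n) k = (if k = 0 then 0 else G a b n (k - 1)) + (of_nat k * b + of_nat n * a) * G a b n k"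

lemma G_zero: "k > n \<Longrightarrow> G a b n k = 0"
  by (induction n arbitrary: k) auto

lemma G_id: "(\<Prod>i<n. x + of_nat i * a) = (\<Sum>i\<le>n. G a b n i * (\<Prod>l<i. x - of_nat l * b))"
proof (induction n)
  case 0 then show ?case by simp
next
  case (Suc n)
  let ?F = "\<lambda>i. (\<Prod>l<i. x - of_nat l * b)"
  have "(\<Prod>i<Suc n. x + of_nat i * a) = (\<Sum>i\<le>n. G a b n i * ?F i) * (x + of_nat n * a)"
    using Suc by simp
  also have "\<dots> = (\<Sum>i\<le>n. G a b n i * ?F (Suc i)) + (\<Sum>i\<le>n. (of_nat i * b + of_nat n * a) * G a b n i * ?F i)"
  proof -
    have "\<And>i. G a b n i * ?F i * (x + of_nat n * a) = G a b n i * ?F (Suc i) + (of_nat i * b + of_nat n * a) * G a b n i * ?F i"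
      by (simp add: ring_distribs)
    thus ?thesis by (simp only: sum_distrib_right sum.distrib)
  qed
  also have "(\<Sum>i\<le>n. G a b n i * ?F (Suc i)) = (\<Sum>i\<le>Suc n. (if i = 0 then 0 else G a b n (i - 1)) * ?F i)"
    by (simp only: sum.atMost_Suc_shift) simp
  also have "(\<Sum>i\<le>n. (of_nat i * b + of_nat n * a) * G a b n i * ?F i) = (\<Sum>i\<le>Suc n. (of_nat i * b + of_nat n * a) * G a b n i * ?F i)"
    by (simp add: G_zero)
  also have "(\<Sum>i\<le>Suc n. (if i = 0 then 0 else G a b n (i - 1)) * ?F i) + (\<Sum>i\<le>Suc n. (of_nat i * b + of_nat n * a) * G a b n i * ?F i)
      = (\<Sum>i\<le>Suc n. G a b (Suc n) i * ?F i)"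
    unfolding sum.distrib[symmetric] by (rule sum.cong) (simp_all add: distrib_right)
  finally show ?case .
qed

lemma gstirling_G: "gstirling a b n k = G a b n k"
proof -
  let ?P = "\<lambda>c::nat \<Rightarrow> 'a. (\<forall>i>n. c i = 0) \<and>
        (\<forall>x. (\<Prod>i<n. x + of_nat i * a) = (\<Sum>i\<le>n. c i * (\<Prod>l<i. x - of_nat l * b)))"
  have "(THE c. ?P c) = G a b n"
  proof (rule the_equality)
    show "?P (G a b n)" using G_id G_zero by blast
  next
    fix c assume c: "?P c"
    have "\<forall>x. (\<Sum>i\<le>n. (c i - G a b n i) * (\<Prod>l<i. x - of_nat l * b)) = 0"
    proof
      fix x
      have "(\<Sum>i\<le>n. (c i - G a b n i) * (\<Prod>l<i. x - of_nat l * b)) =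
         (\<Sum>i\<le>n. c i * (\<Prod>l<i. x - of_nat l * b)) - (\<Sum>i\<le>n. G a b n i * (\<Prod>l<i. x - of_nat l * b))"
        by (simp add: sum_subtractf left_diff_distrib)
      also have "\<dots> = 0" using c G_id[where n=n and a=a and b=b and x=x] by simp
      finally show "(\<Sum>i\<le>n. (c i - G a b n i) * (\<Prod>l<i. x - of_nat l * b)) = 0" .
    qed
    hence "\<forall>i\<le>n. c i - G a b n i = 0" by (rule uniq)
    show "c = G a b n"
    proof
      fix i show "c i = G a b n i"
      proof (cases "i \<le> n")
        case True then show ?thesis using \<open>\<forall>i\<le>n. c i - G a b n i = 0\<close> by simp
      next
        case False then show ?thesis using c G_zero[of n i] by simp
      qed
    qed
  qed
  thus ?thesis unfolding gstirling_def by simp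
qed


definition tcons :: "nat \<Rightarrow> (nat \<Rightarrow> nat) \<Rightarrow> nat \<Rightarrow> nat" where
  "tcons x g = (\<lambda>t. if t = 0 then x else g (t - 1))"

lemma tcons_inj: "tcons x g = tcons y h \<Longrightarrow> x = y \<and> g = h"
proof -
  assume e: "tcons x g = tcons y h"
  have "x = y" using fun_cong[OF e, of 0] by (simp add: tcons_def)
  moreover have "g = h"
  proof
    fix t show "g t = h t" using fun_cong[OF e, of "Suc t"] by (simp add: tcons_def)
  qed
  ultimately show ?thesis by simp
qed

lemma mt0: "mono_tuples 0 lo hi = {\<lambda>_. 0}"
  unfolding mono_tuples_def by auto

lemma mt_Suc: "mono_tuples (Suc r) lo hi = (\<lambda>(x,g). tcons x g) ` (SIGMA x:{lo..hi}. mono_tuples r x hi)"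
proof (rule set_eqI, rule iffI)
  fix f assume f: "f \<in> mono_tuples (Suc r) lo hi"
  define g where "g = (\<lambda>t. f (Suc t))"
  have ft: "f = tcons (f 0) g"
  proof
    fix t show "f t = tcons (f 0) g t" by (cases t) (simp_all add: tcons_def g_def)
  qed
  have "g \<in> mono_tuples r (f 0) hi" using f unfolding mono_tuples_def g_def
    by auto
  moreover have "f 0 \<in> {lo..hi}" using f unfolding mono_tuples_def by auto
  ultimately show "f \<in> (\<lambda>(x,g). tcons x g) ` (SIGMA x:{lo..hi}. mono_tuples r x hi)"
    using ft by (metis (no_types, lifting) SigmaI case_prod_conv image_eqI)
next
  fix f assume "f \<in> (\<lambda>(x,g). tcons x g) ` (SIGMA x:{lo..hi}. mono_tuples r x hi)"
  then obtain x g where x: "lo \<le> x" "x \<le> hi" and g: "g \<in> mono_tuples r x hi" and fe: "f = tcons x g"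
    by auto
  have g1: "\<forall>t<r. x \<le> g t \<and> g t \<le> hi" and g2: "\<forall>t u. t \<le> u \<longrightarrow> u < r \<longrightarrow> g t \<le> g u"
    and g3: "\<forall>t\<ge>r. g t = 0" using g unfolding mono_tuples_def by auto
  have A: "\<forall>t<Suc r. lo \<le> f t \<and> f t \<le> hi"
  proof (intro allI impI)
    fix t assume "t < Suc r" then show "lo \<le> f t \<and> f t \<le> hi"
      using x g1 by (cases t) (auto simp: fe tcons_def)
  qed
  have B: "\<forall>t u. t \<le> u \<longrightarrow> u < Suc r \<longrightarrow> f t \<le> f u"
  proof (intro allI impI)
    fix t u assume tu: "t \<le> u" "u < Suc r"
    show "f t \<le> f u"
    proof (cases t)
      case 0 then show ?thesis using g1 tu by (cases u) (auto simp: fe tcons_def)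
    next
      case (Suc t') then obtain u' where "u = Suc u'" using tu by (cases u) auto
      then show ?thesis using g2 tu Suc by (auto simp: fe tcons_def)
    qed
  qed
  have C: "\<forall>t\<ge>Suc r. f t = 0"
  proof (intro allI impI)
    fix t assume "Suc r \<le> t" then show "f t = 0" using g3 by (cases t) (auto simp: fe tcons_def)
  qed
  show "f \<in> mono_tuples (Suc r) lo hi" using A B C unfolding mono_tuples_def by blast
qed

lemma mt_finite: "finite (mono_tuples r lo hi)"
proof (induction r arbitrary: lo)
  case 0 then show ?case by (simp add: mt0)
next
  case (Suc r) then show ?case by (simp add: mt_Suc)
qed

definition W :: "'a::field_char_0 \<Rightarrow> 'a \<Rightarrow> nat \<Rightarrow> nat \<Rightarrow> nat \<Rightarrow> nat \<Rightarrow> 'a" where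
  "W a b m k r lo = (\<Sum>f\<in>mono_tuples r lo k.
      \<Prod>l<r. (a + b) * of_nat (f l) + a * (of_nat m - of_nat (r - l)))"

lemma W0: "W a b m k 0 lo = 1"
  by (simp add: W_def mt0)

lemma W_Suc: "W a b m k (Suc r) lo =
   (\<Sum>x\<in>{lo..k}. ((a + b) * of_nat x + a * (of_nat m - of_nat (Suc r))) * W a b m k r x)"
proof -
  let ?h = "\<lambda>r f. \<Prod>l<r. (a + b) * of_nat (f l) + a * (of_nat m - of_nat (r - l))"
  have inj: "inj_on (\<lambda>(x,g). tcons x g) (SIGMA x:{lo..k}. mono_tuples r x k)"
    by (auto intro!: inj_onI dest: tcons_inj)
  have "W a b m k (Suc r) lo = (\<Sum>p\<in>(SIGMA x:{lo..k}. mono_tuples r x k). ?h (Suc r) (case p of (x,g) \<Rightarrow> tcons x g))"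
    unfolding W_def mt_Suc by (subst sum.reindex[OF inj]) (simp add: comp_def)
  also have "\<dots> = (\<Sum>x\<in>{lo..k}. \<Sum>g\<in>mono_tuples r x k. ?h (Suc r) (tcons x g))"
    by (subst sum.Sigma) (auto simp: mt_finite split_beta)
  also have "\<dots> = (\<Sum>x\<in>{lo..k}. ((a + b) * of_nat x + a * (of_nat m - of_nat (Suc r))) * W a b m k r x)"
  proof (rule sum.cong[OF refl])
    fix x
    have "\<And>g. ?h (Suc r) (tcons x g) = ((a + b) * of_nat x + a * (of_nat m - of_nat (Suc r))) * ?h r g"
      by (simp only: prod.lessThan_Suc_shift) (simp add: tcons_def)
    then show "(\<Sum>g\<in>mono_tuples r x k. ?h (Suc r) (tcons x g)) = ((a + b) * of_nat x + a * (of_nat m - of_nat (Suc r))) * W a b m k r x"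
      by (simp add: W_def sum_distrib_left)
  qed
  finally show ?thesis .
qed

lemma W_rec: "lo \<le> k \<Longrightarrow> W a b m k (Suc r) lo =
   ((a + b) * of_nat lo + a * (of_nat m - of_nat (Suc r))) * W a b m k r lo + W a b m k (Suc r) (Suc lo)"
proof -
  assume "lo \<le> k"
  then have "{lo..k} = insert lo {Suc lo..k}" by auto
  then show ?thesis unfolding W_Suc by simp
qed

lemma W_big: "k < lo \<Longrightarrow> W a b m k (Suc r) lo = 0"
  unfolding W_Suc by simp


lemma main:
  fixes a b :: "'a::field_char_0"
  shows "s \<le> k \<Longrightarrow> G a b (k + m) k = (\<Sum>j\<le>s. W a b m k (s - j) (k - j) * G a b (k + m - s) (k - j))"
proof (induction s)
  case 0 then show ?case by (simp add: W0)
next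
  case (Suc s)
  define n' where "n' = k + m - Suc s"
  have kms: "k + m - s = Suc n'" using Suc.prems unfolding n'_def by simp
  define c where "c j = (a + b) * of_nat (k - j) + a * (of_nat m - of_nat (Suc (s - j)))" for j
  have Gs: "G a b (Suc n') (k - j) = G a b n' (k - Suc j) + c j * G a b n' (k - j)" if "j \<le> s" for j
  proof -
    have "c j = of_nat (k - j) * b + of_nat n' * a"
      using that Suc.prems unfolding c_def n'_def
      by (simp add: of_nat_diff algebra_simps)
    moreover have "k - j \<noteq> 0" "k - j - 1 = k - Suc j" using that Suc.prems by auto
    ultimately show ?thesis by simp
  qed
  have Ws: "W a b m k (Suc s - j) (k - j) = c j * W a b m k (s - j) (k - j) + W a b m k (Suc (s - j)) (Suc (k - j))"
    if "j \<le> s" for j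
  proof -
    have "Suc s - j = Suc (s - j)" using that by simp
    then show ?thesis unfolding c_def using W_rec[of "k - j" k a b m "s - j"] by simp
  qed
  define D where "D j = W a b m k (Suc s - j) (Suc k - j) * G a b n' (k - j)" for j
  have D1: "(\<Sum>j\<le>Suc s. D j) = (\<Sum>j\<le>s. W a b m k (s - j) (k - j) * G a b n' (k - Suc j))"
    by (simp only: sum.atMost_Suc_shift) (simp add: D_def W_big)
  have D2: "(\<Sum>j\<le>Suc s. D j) = (\<Sum>j\<le>s. W a b m k (Suc (s - j)) (Suc (k - j)) * G a b n' (k - j)) + G a b n' (k - Suc s)"
  proof -
    have "(\<Sum>j\<le>s. D j) = (\<Sum>j\<le>s. W a b m k (Suc (s - j)) (Suc (k - j)) * G a b n' (k - j))"
      using Suc.prems by (intro sum.cong) (auto simp: D_def Suc_diff_le)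
    moreover have "D (Suc s) = G a b n' (k - Suc s)" by (simp add: D_def W0)
    ultimately show ?thesis by simp
  qed
  have "(\<Sum>j\<le>Suc s. W a b m k (Suc s - j) (k - j) * G a b (k + m - Suc s) (k - j))
     = (\<Sum>j\<le>s. W a b m k (Suc s - j) (k - j) * G a b n' (k - j)) + G a b n' (k - Suc s)"
    by (simp add: n'_def W0)
  also have "(\<Sum>j\<le>s. W a b m k (Suc s - j) (k - j) * G a b n' (k - j))
     = (\<Sum>j\<le>s. c j * W a b m k (s - j) (k - j) * G a b n' (k - j))
       + (\<Sum>j\<le>s. W a b m k (Suc (s - j)) (Suc (k - j)) * G a b n' (k - j))"
    by (simp add: Ws sum.distrib[symmetric] distrib_right)
  also have "\<dots> + G a b n' (k - Suc s) = (\<Sum>j\<le>s. c j * W a b m k (s - j) (k - j) * G a b n' (k - j))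
      + (\<Sum>j\<le>s. W a b m k (s - j) (k - j) * G a b n' (k - Suc j))"
    using D1 D2 by (simp add: add.assoc)
  also have "\<dots> = (\<Sum>j\<le>s. W a b m k (s - j) (k - j) * G a b (k + m - s) (k - j))"
    unfolding sum.distrib[symmetric] kms
  proof (rule sum.cong[OF refl])
    fix j assume "j \<in> {..s}" hence js: "j \<le> s" by simp
    show "c j * W a b m k (s - j) (k - j) * G a b n' (k - j) + W a b m k (s - j) (k - j) * G a b n' (k - Suc j)
      = W a b m k (s - j) (k - j) * G a b (Suc n') (k - j)"
      by (simp only: Gs[OF js]) (simp add: algebra_simps)
  qed
  also have "\<dots> = G a b (k + m) k" using Suc by simp
  finally show ?case by simp
qed


theorem theorem8:
  fixes a b :: "'a::field_char_0" and k m s :: nat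
  assumes "s \<le> k"
  shows "gstirling a b (k + m) k =
    (\<Sum>j\<le>s. (\<Sum>f\<in>mono_tuples (s - j) (k - j) k.
                 \<Prod>l<s - j. (a + b) * of_nat (f l) + a * (of_nat m - of_nat (s - j - l)))
             * gstirling a b (k + m - s) (k - j))"
  using main[OF assms, of a b m] by (simp add: gstirling_G W_def)

end
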